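(* Let $\mathcal S$ be a (possibly infinite) set of curves in $\mathbb C^2$, each of degree at most $d$, and suppose that $\bigcap_{C\in\mathcal S}C$ contains a set $I$ with $|I|>d^2$. Then there is a curve $C_0$ with $C_0\subset\bigcap_{C\in\mathcal S}C$ and $|C_0\cap I|\geq |I|-(d-1)^2$.
   Context: A curve in $\mathbb C^2$ is the zero set of a polynomial in $\mathbb C[x,y]\setminus\mathbb C$; its degree is the minimum degree of a defining polynomial. *)

theory Defs
  imports "HOL-Computational_Algebra.Polynomial"
begin

text \<open>Bivariate complex polynomials f(x,y) are represented as polynomials in y
whose coefficients are polynomials in x: type complex poly poly.\<close>

type_synonym bipoly = "complex poly poly"

definition bipoly_eval :: "bipoly \<Rightarrow> complex \<times> complex \<Rightarrow> complex" where
  "bipoly_eval p z = poly (map_poly (\<lambda>c. poly c (fst z)) p) (snd z)"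

definition total_degree :: "bipoly \<Rightarrow> nat" where
  "total_degree p = Max ({degree (coeff p j) + j | j. coeff p j \<noteq> 0} \<union> {0})"

definition zero_set :: "bipoly \<Rightarrow> (complex \<times> complex) set" where
  "zero_set p = {z. bipoly_eval p z = 0}"

definition is_curve :: "(complex \<times> complex) set \<Rightarrow> bool" where
  "is_curve C \<longleftrightarrow> (\<exists>p. total_degree p > 0 \<and> C = zero_set p)"

definition curve_degree :: "(complex \<times> complex) set \<Rightarrow> nat" where
  "curve_degree C = (LEAST n. \<exists>p. total_degree p > 0 \<and> C = zero_set p \<and> total_degree p = n)"

end

theory Submission
  imports Defs "HOL-Computational_Algebra.Polynomial_Factorial" "HOL-Computational_Algebra.Field_as_Ring"
begin


lemma map_poly_hom_add:
  assumes "f 0 = 0" "\<And>a b. f (a + b) = f a + f b"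
  shows "map_poly f (p + q) = map_poly f p + map_poly f q"
  by (intro poly_eqI) (simp add: coeff_map_poly assms)

lemma map_poly_hom_mult:
  fixes f :: "'a::comm_semiring_1 \<Rightarrow> 'b::comm_semiring_1"
  assumes f0: "f 0 = 0" and fa: "\<And>a b. f (a + b) = f a + f b" and fm: "\<And>a b. f (a * b) = f a * f b"
  shows "map_poly f (p * q) = map_poly f p * map_poly f q"
proof (induction p)
  case 0 then show ?case by simp
next
  case (pCons a p)
  have "map_poly f (pCons a p * q) = map_poly f (smult a q) + map_poly f (pCons 0 (p * q))"
    by (simp only: mult_pCons_left map_poly_hom_add[OF f0 fa])
  also have "\<dots> = smult (f a) (map_poly f q) + pCons 0 (map_poly f p * map_poly f q)"
    using pCons by (simp add: map_poly_smult[OF f0 fm] map_poly_pCons[where f=f, OF f0] f0)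
  also have "\<dots> = map_poly f (pCons a p) * map_poly f q"
    by (simp add: map_poly_pCons[where f=f, OF f0])
  finally show ?case .
qed

abbreviation ev :: "bipoly \<Rightarrow> complex \<times> complex \<Rightarrow> complex" where "ev \<equiv> bipoly_eval"

lemma ev_mult: "ev (p * q) z = ev p z * ev q z"
  unfolding bipoly_eval_def
  by (subst map_poly_hom_mult) (auto simp: poly_mult)

lemma ev_add: "ev (p + q) z = ev p z + ev q z"
  unfolding bipoly_eval_def
  by (subst map_poly_hom_add) auto

lemma ev_0[simp]: "ev 0 z = 0" by (simp add: bipoly_eval_def)

lemma ev_const[simp]: "ev [:[:c:]:] z = c" by (simp add: bipoly_eval_def map_poly_pCons)
lemma ev_1[simp]: "ev 1 z = 1" by (simp add: bipoly_eval_def)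

lemma ev_smult: "ev (smult [:c:] p) z = c * ev p z"
  unfolding bipoly_eval_def
  by (subst map_poly_smult) auto

lemma ev_sum: "ev (\<Sum>x\<in>A. f x) z = (\<Sum>x\<in>A. ev (f x) z)"
  by (induction A rule: infinite_finite_induct) (auto simp: ev_add)

lemma ev_prod: "ev (\<Prod>x\<in>A. f x) z = (\<Prod>x\<in>A. ev (f x) z)"
  by (induction A rule: infinite_finite_induct) (auto simp: ev_mult)

lemma ev_linx[simp]: "ev [:[:- a, 1:]:] z = fst z - a" by (simp add: bipoly_eval_def map_poly_pCons)
lemma ev_liny[simp]: "ev [:[:- b:], 1:] z = snd z - b" by (simp add: bipoly_eval_def map_poly_pCons)

definition psi :: "bipoly \<Rightarrow> complex poly poly" where
  "psi p = poly (map_poly (map_poly (\<lambda>a. [:a:])) p) (monom (monom 1 1) 1)"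

lemma cmap_hom:
  "map_poly (\<lambda>a::complex. [:a:]) (p * q) = map_poly (\<lambda>a. [:a:]) p * map_poly (\<lambda>a. [:a:]) q"
  "map_poly (\<lambda>a::complex. [:a:]) (p + q) = map_poly (\<lambda>a. [:a:]) p + map_poly (\<lambda>a. [:a:]) q"
  by (rule map_poly_hom_mult map_poly_hom_add; simp)+

lemma psi_mult: "psi (p * q) = psi p * psi q"
  unfolding psi_def
  by (subst map_poly_hom_mult) (auto simp: poly_mult cmap_hom)

lemma cmap_eq0: "map_poly (\<lambda>a::complex. [:a:]) c = 0 \<longleftrightarrow> c = 0"
  by (subst map_poly_eq_0_iff) auto

lemma deg_cmap2: "degree (map_poly (map_poly (\<lambda>a::complex. [:a:])) p) = degree p"
  by (rule degree_map_poly) (simp add: cmap_eq0)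

lemma coeff_cmap2: "coeff (map_poly (map_poly (\<lambda>a::complex. [:a:])) p) i = map_poly (\<lambda>a. [:a:]) (coeff p i)"
  by (simp add: coeff_map_poly)

lemma coeff_psi:
  "coeff (coeff (psi p) k) j = (if j \<le> k then coeff (coeff p j) (k - j) else 0)"
proof -
  have e: "\<And>i. coeff (map_poly (map_poly (\<lambda>a. [:a:])) p) i * monom (monom 1 1) 1 ^ i =
      map_poly (\<lambda>a::complex. [:a:]) (coeff p i) * monom (monom 1 i) i"
    by (simp add: coeff_map_poly monom_power)
  have "psi p = (\<Sum>i\<le>degree p. map_poly (\<lambda>a. [:a:]) (coeff p i) * monom (monom 1 i) i)"
    by (simp only: psi_def poly_altdef deg_cmap2 e)
  then have "coeff (coeff (psi p) k) j =
     (\<Sum>i\<le>degree p. if j = i \<and> i \<le> k then coeff (coeff p i) (k - i) else 0)"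
    by (simp add: coeff_sum mult.commute[of _ "monom _ _"] coeff_monom_mult coeff_map_poly
        coeff_monom cong: if_cong)
     (intro sum.cong refl, auto simp: coeff_monom)
  also have "\<dots> = (if j \<le> k then coeff (coeff p j) (k - j) else 0)"
  proof -
    have "(\<Sum>i\<le>degree p. if j = i \<and> i \<le> k then coeff (coeff p i) (k - i) else 0)
      = (\<Sum>i\<le>degree p. if j = i then (if j \<le> k then coeff (coeff p j) (k - j) else 0) else 0)"
      by (intro sum.cong) auto
    also have "\<dots> = (if j \<le> k then coeff (coeff p j) (k - j) else 0)"
      by (simp add: sum.delta coeff_eq_0)
    finally show ?thesis .
  qed
  finally show ?thesis .
qed


abbreviation td :: "bipoly \<Rightarrow> nat" where "td \<equiv> total_degree"

lemma td_set_finite: "finite ({degree (coeff p j) + j | j. coeff p j \<noteq> 0} \<union> {0})"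
proof -
  have "{degree (coeff p j) + j | j. coeff p j \<noteq> 0} \<subseteq> (\<lambda>j. degree (coeff p j) + j) ` {..degree p}"
    using le_degree by fastforce
  then show ?thesis by (meson finite_Un finite_atMost finite_imageI finite_insert finite.emptyI finite_subset)
qed

lemma td_coeff: "coeff (coeff p j) i \<noteq> 0 \<Longrightarrow> i + j \<le> td p"
proof -
  assume h: "coeff (coeff p j) i \<noteq> 0"
  then have "coeff p j \<noteq> 0" by auto
  moreover have "i \<le> degree (coeff p j)" using h le_degree by blast
  ultimately have "i + j \<le> degree (coeff p j) + j" "degree (coeff p j) + j \<in> {degree (coeff p j) + j | j. coeff p j \<noteq> 0} \<union> {0}"
    by auto
  then show ?thesis unfolding total_degree_def using Max_ge[OF td_set_finite] le_trans by blast
qed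

lemma td_le: assumes "\<And>i j. coeff (coeff p j) i \<noteq> 0 \<Longrightarrow> i + j \<le> k" shows "td p \<le> k"
  unfolding total_degree_def
proof (subst Max_le_iff[OF td_set_finite], blast, safe)
  fix j assume "coeff p j \<noteq> 0"
  then have "coeff (coeff p j) (degree (coeff p j)) \<noteq> 0" by simp
  then show "degree (coeff p j) + j \<le> k" using assms by blast
qed

lemma td_psi: "td p = degree (psi p)"
proof (rule antisym)
  show "td p \<le> degree (psi p)"
  proof (rule td_le)
    fix i j assume "coeff (coeff p j) i \<noteq> 0"
    then have "coeff (coeff (psi p) (i + j)) j \<noteq> 0" by (simp add: coeff_psi)
    then have "coeff (psi p) (i + j) \<noteq> 0" by auto
    then show "i + j \<le> degree (psi p)" by (rule le_degree)
  qed
  show "degree (psi p) \<le> td p"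
  proof (rule degree_le, intro allI impI)
    fix k assume k: "td p < k"
    show "coeff (psi p) k = 0"
    proof (rule poly_eqI)
      fix j
      have "coeff (coeff p j) (k - j) = 0" if "j \<le> k"
      proof (rule ccontr)
        assume "coeff (coeff p j) (k - j) \<noteq> 0"
        from td_coeff[OF this] that k show False by simp
      qed
      then show "coeff (coeff (psi p) k) j = coeff 0 j"
        by (auto simp: coeff_psi)
    qed
  qed
qed

lemma psi_eq0: "psi p = 0 \<longleftrightarrow> p = 0"
proof
  assume "psi p = 0"
  show "p = 0"
  proof (rule poly_eqI)
    fix j show "coeff p j = coeff 0 j"
    proof (rule poly_eqI)
      fix i
      have "coeff (coeff (psi p) (i + j)) j = 0" using \<open>psi p = 0\<close> by simp
      then show "coeff (coeff p j) i = coeff (coeff 0 j) i" by (simp add: coeff_psi)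
    qed
  qed
qed (simp add: psi_def)

lemma td_mult: "p \<noteq> 0 \<Longrightarrow> q \<noteq> 0 \<Longrightarrow> td (p * q) = td p + td q"
  by (simp add: td_psi psi_mult degree_mult_eq psi_eq0)

lemma td_mult_le: "td (p * q) \<le> td p + td q"
  by (simp add: td_psi psi_mult degree_mult_le)

definition LY :: "bipoly \<Rightarrow> nat" where "LY p = degree (lead_coeff (psi p))"
definition LX :: "bipoly \<Rightarrow> nat" where "LX p = td p - LY p"

lemma LM_coeff: assumes "p \<noteq> 0" shows "LY p \<le> td p" "coeff (coeff p (LY p)) (LX p) \<noteq> 0"
proof -
  have "lead_coeff (psi p) \<noteq> 0" using assms psi_eq0 by simp
  then have "coeff (coeff (psi p) (degree (psi p))) (LY p) \<noteq> 0" unfolding LY_def by simp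
  then show "LY p \<le> td p" "coeff (coeff p (LY p)) (LX p) \<noteq> 0"
    unfolding LX_def td_psi by (auto simp: coeff_psi split: if_splits)
qed

lemma LY_mult: "p \<noteq> 0 \<Longrightarrow> q \<noteq> 0 \<Longrightarrow> LY (p * q) = LY p + LY q"
proof -
  assume "p \<noteq> 0" "q \<noteq> 0"
  then have "lead_coeff (psi p) \<noteq> 0" "lead_coeff (psi q) \<noteq> 0" by (auto simp: psi_eq0)
  then show ?thesis unfolding LY_def psi_mult lead_coeff_mult by (simp add: degree_mult_eq)
qed

lemma LX_mult: "p \<noteq> 0 \<Longrightarrow> q \<noteq> 0 \<Longrightarrow> LX (p * q) = LX p + LX q"
  using LY_mult[of p q] td_mult[of p q] LM_coeff(1)[of p] LM_coeff(1)[of q] unfolding LX_def by simp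

lemma td0_const: assumes "td p = 0" shows "p = [:[:coeff (coeff p 0) 0:]:]"
proof (rule poly_eqI)
  fix j show "coeff p j = coeff [:[:coeff (coeff p 0) 0:]:] j"
  proof (rule poly_eqI)
    fix i show "coeff (coeff p j) i = coeff (coeff [:[:coeff (coeff p 0) 0:]:] j) i"
      using td_coeff[of p j i] assms by (cases j; cases i) (auto simp: coeff_pCons split: nat.splits)
  qed
qed

lemma td0_unit: assumes "p \<noteq> 0" "td p = 0" shows "is_unit p"
proof -
  let ?c = "coeff (coeff p 0) 0"
  have "?c \<noteq> 0" using td0_const[OF assms(2)] assms(1) by (metis pCons_0_0)
  then show ?thesis using td0_const[OF assms(2)] by (metis is_unit_const_poly_iff is_unit_triv)
qed

lemma td_1[simp]: "td 1 = 0"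
  by (rule le_antisym, rule td_le) (auto simp: one_pCons coeff_pCons split: nat.splits)

lemma unit_td0: assumes "is_unit p" shows "td p = 0"
proof -
  obtain r where "1 = p * r" using assms by (auto elim: dvdE)
  then have "p \<noteq> 0" "r \<noteq> 0" by auto
  then show ?thesis using td_mult[of p r] \<open>1 = p * r\<close> by simp
qed

lemma unit_noroot: assumes "is_unit p" shows "ev p z \<noteq> 0"
proof -
  obtain r where "1 = p * r" using assms by (auto elim: dvdE)
  then have "ev p z * ev r z = 1" by (metis ev_1 ev_mult)
  then show ?thesis by auto
qed


lemma c_add: "[:a + b:] = [:a:] + [:b:]" by simp
lemma c_one: "[:1:] = 1" by (simp add: one_pCons)

interpretation bv: vector_space "\<lambda>c (p::bipoly). smult [:c:] p"
proof
  fix a b :: complex and x y :: bipoly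
  show "smult [:a:] (x + y) = smult [:a:] x + smult [:a:] y" by (simp add: smult_add_right)
  show "smult [:a + b:] x = smult [:a:] x + smult [:b:] x" by (simp only: c_add smult_add_left)
  show "smult [:a:] (smult [:b:] x) = smult [:a * b:] x" by (simp add: mult.commute)
  show "smult [:1:] x = x" by (simp add: c_one)
qed

lemma fam_indep:
  assumes fin: "finite J"
    and ind: "\<And>c. (\<Sum>x\<in>J. smult [:c x:] (\<phi> x)) = 0 \<Longrightarrow> \<forall>x\<in>J. c x = 0"
  shows "inj_on \<phi> J" "bv.independent (\<phi> ` J)"
proof -
  show inj: "inj_on \<phi> J"
  proof (rule inj_onI, rule ccontr)
    fix x y assume xy: "x \<in> J" "y \<in> J" "\<phi> x = \<phi> y" "x \<noteq> y"
    let ?c = "\<lambda>u. if u = x then 1 else if u = y then -1 else (0::complex)"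
    have "(\<Sum>u\<in>J. smult [:?c u:] (\<phi> u)) = (\<Sum>u\<in>J. (if u = x then \<phi> x else 0) + (if u = y then - \<phi> y else 0))"
      using xy by (intro sum.cong) auto
    also have "\<dots> = 0" using xy fin by (simp add: sum.distrib)
    finally have "\<forall>u\<in>J. ?c u = 0" by (rule ind)
    then show False using xy by auto
  qed
  show "bv.independent (\<phi> ` J)"
  proof (rule bv.independent_if_scalars_zero)
    show "finite (\<phi> ` J)" using fin by simp
    fix f v assume h: "(\<Sum>x\<in>\<phi> ` J. smult [:f x:] x) = 0" "v \<in> \<phi> ` J"
    have "(\<Sum>x\<in>J. smult [:f (\<phi> x):] (\<phi> x)) = 0" using h(1) by (simp add: sum.reindex[OF inj])
    then have "\<forall>x\<in>J. f (\<phi> x) = 0" by (rule ind)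
    then show "f v = 0" using h(2) by auto
  qed
qed

definition mon :: "nat \<Rightarrow> nat \<Rightarrow> bipoly" where "mon i j = monom (monom 1 i) j"

definition M :: "nat \<Rightarrow> (nat \<times> nat) set" where "M k = {(i, j). i + j \<le> k}"

lemma M_finite[simp]: "finite (M k)"
  by (rule finite_subset[of _ "{..k} \<times> {..k}"]) (auto simp: M_def)

lemma coeff_mon: "coeff (coeff (mon i j) j') i' = (if i = i' \<and> j = j' then 1 else 0)"
  by (simp add: mon_def coeff_monom)

lemma td_mon: "td (mon i j) \<le> i + j"
  by (rule td_le) (auto simp: coeff_mon split: if_splits)

lemma coeff_comb:
  assumes "finite T"
  shows "coeff (coeff (\<Sum>(i,j)\<in>T. smult [:c (i,j):] (mon i j)) j') i' = (if (i', j') \<in> T then c (i', j') else 0)"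
proof -
  have "coeff (coeff (\<Sum>(i,j)\<in>T. smult [:c (i,j):] (mon i j)) j') i' =
        (\<Sum>x\<in>T. if x = (i', j') then c (i', j') else 0)"
    by (simp add: coeff_sum case_prod_beta coeff_mon mon_def coeff_monom)
       (intro sum.cong refl, auto simp: coeff_monom)
  also have "\<dots> = (if (i', j') \<in> T then c (i', j') else 0)"
    using assms by (simp add: sum.delta')
  finally show ?thesis .
qed

lemma expand_td:
  assumes "td p \<le> k"
  shows "p = (\<Sum>(i,j)\<in>M k. smult [:(\<lambda>(i,j). coeff (coeff p j) i) (i,j):] (mon i j))"
proof (rule poly_eqI)
  fix j show "coeff p j = coeff (\<Sum>(i,j)\<in>M k. smult [:(\<lambda>(i,j). coeff (coeff p j) i) (i,j):] (mon i j)) j"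
  proof (rule poly_eqI)
    fix i
    have "coeff (coeff p j) i = 0" if "(i, j) \<notin> M k"
    proof (rule ccontr)
      assume "coeff (coeff p j) i \<noteq> 0"
      from td_coeff[OF this] assms that show False by (auto simp: M_def)
    qed
    then show "coeff (coeff p j) i = coeff (coeff (\<Sum>(i,j)\<in>M k. smult [:(\<lambda>(i,j). coeff (coeff p j) i) (i,j):] (mon i j)) j) i"
      by (subst coeff_comb) auto
  qed
qed

lemma in_span_td:
  assumes "td p \<le> k"
  shows "p \<in> bv.span ((\<lambda>(i,j). mon i j) ` M k)"
proof -
  have "(\<Sum>(i,j)\<in>M k. smult [:(\<lambda>(i,j). coeff (coeff p j) i) (i,j):] (mon i j)) \<in> bv.span ((\<lambda>(i,j). mon i j) ` M k)"
    apply (intro bv.span_sum)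
    apply clarsimp
    apply (rule bv.span_scale)
    apply (rule bv.span_base)
    by force
  then show ?thesis using expand_td[OF assms] by simp
qed


lemma card_M: "2 * card (M k) = (k + 1) * (k + 2)"
proof (induction k)
  case 0
  have "M 0 = {(0, 0)}" by (auto simp: M_def)
  then show ?case by simp
next
  case (Suc k)
  have eq: "M (Suc k) = M k \<union> (\<lambda>i. (i, Suc k - i)) ` {..Suc k}"
    by (auto simp: M_def image_iff)
  have disj: "M k \<inter> (\<lambda>i. (i, Suc k - i)) ` {..Suc k} = {}" by (auto simp: M_def)
  have inj: "inj_on (\<lambda>i. (i, Suc k - i)) {..Suc k}" by (auto simp: inj_on_def)
  have "card (M (Suc k)) = card (M k) + (Suc k + 1)"
    unfolding eq by (subst card_Un_disjoint) (use disj inj in \<open>auto simp: card_image\<close>)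
  then show ?case using Suc by (simp add: algebra_simps)
qed

lemma card_div:
  assumes "a + b = m" "m \<le> k"
  shows "card {x \<in> M k. a \<le> fst x \<and> b \<le> snd x} = card (M (k - m))"
proof -
  have "{x \<in> M k. a \<le> fst x \<and> b \<le> snd x} = (\<lambda>(i, j). (i + a, j + b)) ` M (k - m)"
  proof (rule set_eqI, rule iffI)
    fix x assume "x \<in> {x \<in> M k. a \<le> fst x \<and> b \<le> snd x}"
    then obtain i j where x: "x = (i, j)" "i + j \<le> k" "a \<le> i" "b \<le> j" by (auto simp: M_def)
    show "x \<in> (\<lambda>(i, j). (i + a, j + b)) ` M (k - m)"
      by (rule rev_image_eqI[of "(i - a, j - b)"]) (use x assms in \<open>auto simp: M_def\<close>)
  qed (use assms in \<open>auto simp: M_def\<close>)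
  moreover have "inj_on (\<lambda>(i, j). (i + a, j + b)) (M (k - m))" by (auto simp: inj_on_def)
  ultimately show ?thesis by (simp add: card_image)
qed

lemma td_prod_le: "td (\<Prod>x\<in>A. f x) \<le> (\<Sum>x\<in>A. td (f x))"
proof (induction A rule: infinite_finite_induct)
  case (insert x F)
  then show ?case using td_mult_le[of "f x" "prod f F"] by simp
qed auto


definition lin :: "complex \<times> complex \<Rightarrow> complex \<times> complex \<Rightarrow> bipoly" where
  "lin z w = (if fst z \<noteq> fst w then [:[:- fst w, 1:]:] else [:[:- snd w:], 1:])"

lemma td_lin: "td (lin z w) \<le> 1"
  unfolding lin_def by (rule td_le) (auto simp: coeff_pCons split: nat.splits if_splits)

lemma ev_lin: "ev (lin z w) w = 0" "z \<noteq> w \<Longrightarrow> ev (lin z w) z \<noteq> 0"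
  unfolding lin_def by (auto simp: prod_eq_iff)

definition Lz :: "(complex \<times> complex) set \<Rightarrow> complex \<times> complex \<Rightarrow> bipoly" where
  "Lz P z = (\<Prod>w\<in>P - {z}. lin z w)"

lemma Lz_props:
  assumes "finite P"
  shows "td (Lz P z) \<le> card P" "\<And>w. w \<in> P \<Longrightarrow> w \<noteq> z \<Longrightarrow> ev (Lz P z) w = 0"
    "ev (Lz P z) z \<noteq> 0"
proof -
  have "td (Lz P z) \<le> (\<Sum>w\<in>P - {z}. td (lin z w))" unfolding Lz_def by (rule td_prod_le)
  also have "\<dots> \<le> (\<Sum>w\<in>P - {z}. 1)" by (intro sum_mono td_lin)
  also have "\<dots> \<le> card P" using assms by (simp add: card_Diff_subset_Int le_diff_conv)
  finally show "td (Lz P z) \<le> card P" .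
  fix w assume "w \<in> P" "w \<noteq> z"
  then show "ev (Lz P z) w = 0" unfolding Lz_def ev_prod using assms
    by (intro prod_zero) (auto intro!: bexI[of _ w] simp: ev_lin)
next
  show "ev (Lz P z) z \<noteq> 0" unfolding Lz_def ev_prod using assms by (auto simp: ev_lin)
qed


lemma weak_bezout:
  assumes f0: "f \<noteq> 0" and g0: "g \<noteq> 0" and cop: "coprime f g" and fin: "finite P"
    and zer: "\<And>z. z \<in> P \<Longrightarrow> ev f z = 0 \<and> ev g z = 0"
  shows "card P \<le> td f * td g"
proof -
  define N where "N = card P"
  define m where "m = td f"
  define n where "n = td g"
  define t where "t = N + m + n"
  define A where "A = M (t - m)"
  define Dv where "Dv = {x \<in> M (t - n). LX f \<le> fst x \<and> LY f \<le> snd x}"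
  define B where "B = M (t - n) - Dv"
  define J where "J = Inl ` P \<union> Inr ` (Inl ` A \<union> Inr ` B)"
  define \<phi> where "\<phi> = case_sum (Lz P) (case_sum (\<lambda>(i,j). mon i j * f) (\<lambda>(i,j). mon i j * g))"
  have finA: "finite A" and finB: "finite B" unfolding A_def B_def by auto
  have finJ: "finite J" unfolding J_def using fin finA finB by auto
  have LXYf: "LX f + LY f = m" using LM_coeff(1)[OF f0] unfolding LX_def m_def by simp
  have ind: "\<forall>x\<in>J. c x = 0" if hc: "(\<Sum>x\<in>J. smult [:c x:] (\<phi> x)) = 0" for c
  proof -
    define LL where "LL = (\<Sum>z\<in>P. smult [:c (Inl z):] (Lz P z))"
    define aa where "aa = (\<Sum>(i,j)\<in>A. smult [:(\<lambda>x. c (Inr (Inl x))) (i,j):] (mon i j))"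
    define bb where "bb = (\<Sum>(i,j)\<in>B. smult [:(\<lambda>x. c (Inr (Inr x))) (i,j):] (mon i j))"
    have "(\<Sum>x\<in>J. smult [:c x:] (\<phi> x)) =
      (\<Sum>x\<in>Inl ` P. smult [:c x:] (\<phi> x)) + ((\<Sum>x\<in>Inr ` Inl ` A. smult [:c x:] (\<phi> x))
         + (\<Sum>x\<in>Inr ` Inr ` B. smult [:c x:] (\<phi> x)))"
      unfolding J_def image_Un
      by (subst sum.union_disjoint, use fin finA finB in auto)+
    also have "\<dots> = LL + (aa * f + bb * g)"
      unfolding LL_def aa_def bb_def
      by (simp add: sum.reindex inj_on_def \<phi>_def sum_distrib_right case_prod_beta)
    finally have eq: "LL + (aa * f + bb * g) = 0" using hc by simp
    have cP: "c (Inl w) = 0" if w: "w \<in> P" for w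
    proof -
      have "ev LL w = (\<Sum>z\<in>P. c (Inl z) * ev (Lz P z) w)" unfolding LL_def ev_sum by (simp add: ev_smult)
      also have "\<dots> = c (Inl w) * ev (Lz P w) w + (\<Sum>z\<in>P - {w}. c (Inl z) * ev (Lz P z) w)"
        using w fin by (simp add: sum.remove)
      also have "(\<Sum>z\<in>P - {w}. c (Inl z) * ev (Lz P z) w) = 0"
      proof (intro sum.neutral ballI)
        fix z assume "z \<in> P - {w}"
        then show "c (Inl z) * ev (Lz P z) w = 0" using Lz_props(2)[OF fin w, of z] by auto
      qed
      finally have "ev LL w = c (Inl w) * ev (Lz P w) w" by simp
      moreover have "ev LL w = 0"
        using arg_cong[OF eq, of "\<lambda>p. ev p w"] zer[OF w] by (simp add: ev_add ev_mult)
      ultimately show ?thesis using Lz_props(3)[OF fin, of w] by simp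
    qed
    then have "LL = 0" unfolding LL_def by (intro sum.neutral) auto
    with eq have eq2: "aa * f = - (bb * g)" by (simp add: eq_neg_iff_add_eq_0)
    have "f dvd bb * g" using eq2 by (metis dvd_minus_iff dvd_triv_right)
    then have "f dvd bb" using coprime_dvd_mult_left_iff[OF cop] by simp
    then obtain h where h: "bb = f * h" by (auto elim: dvdE)
    have bb0: "bb = 0"
    proof (rule ccontr)
      assume "bb \<noteq> 0"
      then have h0: "h \<noteq> 0" using h by auto
      have "coeff (coeff bb (LY bb)) (LX bb) \<noteq> 0" using LM_coeff(2) \<open>bb \<noteq> 0\<close> by blast
      then have "(LX bb, LY bb) \<in> B" unfolding bb_def by (subst (asm) coeff_comb[OF finB]) (auto split: if_splits)
      moreover have "LX bb = LX f + LX h" "LY bb = LY f + LY h"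
        unfolding h using f0 h0 by (auto simp: LX_mult LY_mult)
      ultimately show False unfolding B_def Dv_def by auto
    qed
    then have aa0: "aa = 0" using eq2 f0 by simp
    have "c (Inr (Inl x)) = 0" if "x \<in> A" for x
    proof -
      obtain i j where x: "x = (i, j)" by force
      have "coeff (coeff aa j) i = 0" using aa0 by simp
      then show ?thesis unfolding aa_def using that x by (subst (asm) coeff_comb[OF finA]) auto
    qed
    moreover have "c (Inr (Inr x)) = 0" if "x \<in> B" for x
    proof -
      obtain i j where x: "x = (i, j)" by force
      have "coeff (coeff bb j) i = 0" using bb0 by simp
      then show ?thesis unfolding bb_def using that x by (subst (asm) coeff_comb[OF finB]) auto
    qed
    ultimately show ?thesis using cP unfolding J_def by auto
  qed
  have inj: "inj_on \<phi> J" and indep: "bv.independent (\<phi> ` J)"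
    using fam_indep[OF finJ, of \<phi>] ind by blast+
  have sp: "\<phi> ` J \<subseteq> bv.span ((\<lambda>(i,j). mon i j) ` M t)"
  proof
    fix p assume "p \<in> \<phi> ` J"
    then obtain x where x: "x \<in> J" "p = \<phi> x" by auto
    have "td p \<le> t"
    proof -
      { fix z assume "x = Inl z"
        then have "td p = td (Lz P z)" using x by (simp add: \<phi>_def)
        also have "\<dots> \<le> N" using Lz_props(1)[OF fin] N_def by simp
        finally have "td p \<le> t" unfolding t_def by simp }
      moreover
      { fix i j assume ij: "x = Inr (Inl (i, j))"
        then have "(i, j) \<in> A" using x unfolding J_def by auto
        then have "i + j \<le> t - m" unfolding A_def M_def by auto
        moreover have "td p \<le> td (mon i j) + td f" using x ij td_mult_le by (simp add: \<phi>_def)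
        ultimately have "td p \<le> t" using td_mon[of i j] unfolding t_def m_def by linarith }
      moreover
      { fix i j assume ij: "x = Inr (Inr (i, j))"
        then have "(i, j) \<in> B" using x unfolding J_def by auto
        then have "i + j \<le> t - n" unfolding B_def M_def by auto
        moreover have "td p \<le> td (mon i j) + td g" using x ij td_mult_le by (simp add: \<phi>_def)
        ultimately have "td p \<le> t" using td_mon[of i j] unfolding t_def n_def by linarith }
      ultimately show ?thesis by (metis obj_sumE surj_pair)
    qed
    then show "p \<in> bv.span ((\<lambda>(i,j). mon i j) ` M t)" by (rule in_span_td)
  qed
  have "card (\<phi> ` J) \<le> card ((\<lambda>(i,j). mon i j) ` M t)"
    using bv.independent_span_bound[OF _ indep sp] by simp
  also have "\<dots> \<le> card (M t)" by (rule card_image_le) simp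
  finally have c1: "card J \<le> card (M t)" using card_image[OF inj] by simp
  have "card J = N + (card A + card B)"
  proof -
    have "card J = card (Inl ` P :: ((complex \<times> complex) + ((nat \<times> nat) + (nat \<times> nat))) set) + card (Inr ` Inl ` A \<union> Inr ` Inr ` B :: ((complex \<times> complex) + ((nat \<times> nat) + (nat \<times> nat))) set)"
      unfolding J_def image_Un
      by (rule card_Un_disjoint) (use fin finA finB in auto)
    also have "card (Inr ` Inl ` A \<union> Inr ` Inr ` B :: ((complex \<times> complex) + ((nat \<times> nat) + (nat \<times> nat))) set) = card (Inr ` Inl ` A :: ((complex \<times> complex) + ((nat \<times> nat) + (nat \<times> nat))) set) + card (Inr ` Inr ` B :: ((complex \<times> complex) + ((nat \<times> nat) + (nat \<times> nat))) set)"
      by (rule card_Un_disjoint) (use fin finA finB in auto)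
    finally show ?thesis unfolding N_def
      by (simp add: card_image inj_on_def)
  qed
  moreover have "card B = card (M (t - n)) - card (M N)"
  proof -
    have "Dv \<subseteq> M (t - n)" unfolding Dv_def by auto
    then have "card B = card (M (t - n)) - card Dv" unfolding B_def by (simp add: card_Diff_subset finite_subset)
    moreover have "card Dv = card (M N)" unfolding Dv_def
      using card_div[OF LXYf, of "t - n"] unfolding t_def by simp
    ultimately show ?thesis by simp
  qed
  moreover have "card (M N) \<le> card (M (t - n))"
    by (rule card_mono) (simp, auto simp: M_def t_def)
  ultimately have c2: "N + card (M (N + n)) + card (M (N + m)) \<le> card (M (N + m + n)) + card (M N)"
    using c1 unfolding A_def t_def by (simp add: add.commute add.left_commute)
  have e1: "2 * card (M (N + n)) = (N + n + 1) * (N + n + 2)" by (rule card_M)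
  have e2: "2 * card (M (N + m)) = (N + m + 1) * (N + m + 2)" by (rule card_M)
  have e3: "2 * card (M (N + m + n)) = (N + m + n + 1) * (N + m + n + 2)" by (rule card_M)
  have e4: "2 * card (M N) = (N + 1) * (N + 2)" by (rule card_M)
  have e5: "(N + m + n + 1) * (N + m + n + 2) + (N + 1) * (N + 2)
      = (N + n + 1) * (N + n + 2) + (N + m + 1) * (N + m + 2) + 2 * (m * n)"
    by (simp add: algebra_simps)
  have "N \<le> m * n" using c2 e1 e2 e3 e4 e5 by linarith
  then show ?thesis unfolding N_def m_def n_def .
qed


lemma common_zero_bound:
  fixes G :: "bipoly set"
  assumes "g0 \<noteq> 0"
    and "\<And>q. prime q \<Longrightarrow> q dvd g0 \<Longrightarrow> \<exists>g\<in>G. g \<noteq> 0 \<and> \<not> q dvd g \<and> td g \<le> k"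
    and "finite P" and "\<And>z. z \<in> P \<Longrightarrow> ev g0 z = 0 \<and> (\<forall>g\<in>G. ev g z = 0)"
  shows "card P \<le> k * td g0"
  using assms
proof (induction "td g0" arbitrary: g0 P rule: less_induct)
  case less
  show ?case
  proof (cases "is_unit g0")
    case True
    then have "P = {}" using less.prems(4) unit_noroot by blast
    then show ?thesis by simp
  next
    case False
    obtain q where q: "q dvd g0" "prime q" using prime_divisor_exists[OF less.prems(1) False] by blast
    then obtain r where r: "g0 = q * r" by (auto elim: dvdE)
    have q0: "q \<noteq> 0" "r \<noteq> 0" using r less.prems(1) by auto
    have tdq: "td q \<noteq> 0" using td0_unit[OF q0(1)] q(2) by (auto simp: prime_def)
    have tdg: "td g0 = td q + td r" using r q0 td_mult by simp
    define P1 where "P1 = {z \<in> P. ev q z = 0}"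
    define P2 where "P2 = {z \<in> P. ev r z = 0}"
    have "P \<subseteq> P1 \<union> P2" using less.prems(4) unfolding P1_def P2_def r by (auto simp: ev_mult)
    then have "card P \<le> card (P1 \<union> P2)" using less.prems(3) P1_def P2_def by (intro card_mono) auto
    also have "\<dots> \<le> card P1 + card P2" by (rule card_Un_le)
    also have "card P1 \<le> k * td q"
    proof -
      obtain g where g: "g \<in> G" "g \<noteq> 0" "\<not> q dvd g" "td g \<le> k" using less.prems(2)[OF q(2) q(1)] by blast
      have "card P1 \<le> td q * td g"
        by (rule weak_bezout[OF q0(1) g(2) prime_imp_coprime[OF q(2) g(3)]])
           (use less.prems(3,4) g(1) in \<open>auto simp: P1_def\<close>)
      also have "\<dots> \<le> k * td q" using g(4) by (simp add: mult.commute)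
      finally show ?thesis .
    qed
    also have "card P2 \<le> k * td r"
    proof (rule less.hyps)
      show "td r < td g0" using tdg tdq by simp
      show "r \<noteq> 0" by (rule q0)
      show "finite P2" using less.prems(3) P2_def by simp
      show "\<And>z. z \<in> P2 \<Longrightarrow> ev r z = 0 \<and> (\<forall>g\<in>G. ev g z = 0)" using less.prems(4) P2_def by auto
      fix q' assume "prime q'" "q' dvd r"
      then show "\<exists>g\<in>G. g \<noteq> 0 \<and> \<not> q' dvd g \<and> td g \<le> k" using less.prems(2) r by auto
    qed
    finally show ?thesis using tdg by (simp add: algebra_simps)
  qed
qed


lemma curve_poly:
  assumes "is_curve C"
  shows "\<exists>p. td p > 0 \<and> C = zero_set p \<and> td p = curve_degree C"
proof -
  from assms obtain p where "td p > 0" "C = zero_set p" unfolding is_curve_def by blast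
  then have "\<exists>n p. td p > 0 \<and> C = zero_set p \<and> td p = n" by blast
  from LeastI_ex[OF this] show ?thesis unfolding curve_degree_def by blast
qed

lemma td_pos_nz: "td p > 0 \<Longrightarrow> p \<noteq> 0"
  by (auto simp: total_degree_def)

lemma empty_case:
  assumes "finite I" "I \<noteq> {}"
  shows "\<exists>p. td p > 0 \<and> I \<subseteq> zero_set p"
proof -
  define q where "q = (\<Prod>z\<in>I. [:- fst z, 1:])"
  have evq: "ev [:q:] z = poly q (fst z)" for z by (simp add: bipoly_eval_def map_poly_pCons)
  have q0: "q \<noteq> 0" unfolding q_def using assms(1) by (simp add: prod_zero_iff)
  have root: "poly q (fst z) = 0" if "z \<in> I" for z
    unfolding q_def poly_prod using assms(1) that by (intro prod_zero) auto
  obtain z0 where "z0 \<in> I" using assms(2) by blast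
  have "degree q \<noteq> 0"
  proof
    assume "degree q = 0"
    then obtain c where "q = [:c:]" by (metis degree_eq_zeroE)
    then show False using q0 root[OF \<open>z0 \<in> I\<close>] by simp
  qed
  moreover have "coeff (coeff [:q:] 0) (degree q) \<noteq> 0" using q0 by simp
  then have "degree q + 0 \<le> td [:q:]" by (rule td_coeff)
  ultimately have "td [:q:] > 0" by simp
  moreover have "I \<subseteq> zero_set [:q:]" using root by (auto simp: zero_set_def evq)
  ultimately show ?thesis by blast
qed

theorem lemma2p3:
  fixes \<S> :: "(complex \<times> complex) set set" and d :: nat and I :: "(complex \<times> complex) set"
  assumes "\<forall>C\<in>\<S>. is_curve C \<and> curve_degree C \<le> d"
    and "I \<subseteq> \<Inter>\<S>"
    and "finite I"
    and "card I > d ^ 2"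
  shows "\<exists>C0. is_curve C0 \<and> C0 \<subseteq> \<Inter>\<S> \<and>
           int (card (C0 \<inter> I)) \<ge> int (card I) - (int d - 1) ^ 2"
proof (cases "\<S> = {}")
  case True
  have "I \<noteq> {}" using assms(4) by auto
  then obtain p where p: "td p > 0" "I \<subseteq> zero_set p" using empty_case[OF assms(3)] by blast
  then have "zero_set p \<inter> I = I" by auto
  then show ?thesis using p True unfolding is_curve_def by (intro exI[of _ "zero_set p"]) auto
next
  case False
  define pc where "pc C = (SOME p. td p > 0 \<and> C = zero_set p \<and> td p \<le> d)" for C
  have pc: "td (pc C) > 0" "C = zero_set (pc C)" "td (pc C) \<le> d" if "C \<in> \<S>" for C
  proof -
    have "\<exists>p. td p > 0 \<and> C = zero_set p \<and> td p \<le> d"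
      using curve_poly assms(1) that by fastforce
    from someI_ex[OF this] show "td (pc C) > 0" "C = zero_set (pc C)" "td (pc C) \<le> d"
      unfolding pc_def by blast+
  qed
  have pc0: "pc C \<noteq> 0" if "C \<in> \<S>" for C using pc(1)[OF that] td_pos_nz by blast
  obtain C1 where C1: "C1 \<in> \<S>" using False by blast
  define Hs where "Hs = {h. \<forall>C\<in>\<S>. h dvd pc C}"
  have Hs_bound: "td h < d + 1" if "h \<in> Hs" for h
  proof -
    have "h dvd pc C1" using that C1 unfolding Hs_def by blast
    then obtain r where r: "pc C1 = h * r" by (auto elim: dvdE)
    then have "h \<noteq> 0" "r \<noteq> 0" using pc0[OF C1] by auto
    then have "td (pc C1) = td h + td r" using r td_mult by simp
    then show ?thesis using pc(3)[OF C1] by simp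
  qed
  have "1 \<in> Hs" unfolding Hs_def by simp
  then obtain h where h: "h \<in> Hs" and hmax: "\<And>h'. h' \<in> Hs \<Longrightarrow> td h' \<le> td h"
    using ex_has_greatest_nat[of "\<lambda>h. h \<in> Hs" 1 td "d + 1"] Hs_bound by blast
  define e where "e = td h"
  define gC where "gC C = pc C div h" for C
  have hdvd: "h dvd pc C" if "C \<in> \<S>" for C using h that unfolding Hs_def by blast
  have fac: "pc C = h * gC C" if "C \<in> \<S>" for C
    unfolding gC_def using hdvd[OF that] by simp
  have h0: "h \<noteq> 0" using fac[OF C1] pc0[OF C1] by auto
  have g0: "gC C \<noteq> 0" if "C \<in> \<S>" for C using fac[OF that] pc0[OF that] by auto
  have tdg: "td (gC C) + e = td (pc C)" if "C \<in> \<S>" for C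
    using fac[OF that] td_mult[OF h0 g0[OF that]] e_def by simp
  have ed: "e \<le> d" using tdg[OF C1] pc(3)[OF C1] by simp
  define P where "P = I - zero_set h"
  have finP: "finite P" using assms(3) P_def by simp
  have cardP: "card P \<le> (d - e) * td (gC C1)"
  proof (rule common_zero_bound[of "gC C1" "gC ` \<S>"])
    show "gC C1 \<noteq> 0" using g0[OF C1] .
    show "finite P" by (rule finP)
  next
    fix q assume q: "prime q" "q dvd gC C1"
    show "\<exists>g\<in>gC ` \<S>. g \<noteq> 0 \<and> \<not> q dvd g \<and> td g \<le> d - e"
    proof (rule ccontr)
      assume "\<not> ?thesis"
      then have all: "q dvd gC C" if "C \<in> \<S>" for C using that g0 tdg pc(3) by fastforce
      have "\<forall>C\<in>\<S>. q * h dvd pc C"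
      proof
        fix C assume "C \<in> \<S>"
        then show "q * h dvd pc C" using all fac by (metis mult.commute mult_dvd_mono dvd_refl)
      qed
      then have "q * h \<in> Hs" unfolding Hs_def by blast
      moreover have "q \<noteq> 0" using q by auto
      then have "td (q * h) = td q + td h" using h0 td_mult by simp
      moreover have "td q \<noteq> 0" using td0_unit[OF \<open>q \<noteq> 0\<close>] q(1) by (auto simp: prime_def)
      ultimately show False using hmax by fastforce
    qed
  next
    fix z assume "z \<in> P"
    then have zI: "z \<in> I" and hz: "ev h z \<noteq> 0" unfolding P_def zero_set_def by auto
    have "ev (gC C) z = 0" if "C \<in> \<S>" for C
    proof -
      have "z \<in> C" using zI assms(2) that by blast
      then have "ev (pc C) z = 0" using pc(2)[OF that] unfolding zero_set_def by blast
      then show ?thesis using fac[OF that] hz by (simp add: ev_mult)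
    qed
    then show "ev (gC C1) z = 0 \<and> (\<forall>g\<in>gC ` \<S>. ev g z = 0)" using C1 by blast
  qed
  also have "\<dots> \<le> (d - e) * (d - e)"
  proof -
    have "td (gC C1) \<le> d - e" using tdg[OF C1] pc(3)[OF C1] by linarith
    then show ?thesis by (rule mult_le_mono2)
  qed
  finally have cardP2: "card P \<le> (d - e) * (d - e)" .
  have e0: "e \<noteq> 0"
  proof
    assume "e = 0"
    then have "is_unit h" using td0_unit[OF h0] e_def by simp
    then have "P = I" unfolding P_def zero_set_def using unit_noroot by blast
    then show False using cardP2 assms(4) \<open>e = 0\<close> by (simp add: power2_eq_square)
  qed
  have curve: "is_curve (zero_set h)" unfolding is_curve_def using e0 e_def by blast
  have sub: "zero_set h \<subseteq> \<Inter>\<S>"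
  proof
    fix z assume "z \<in> zero_set h"
    then have "ev h z = 0" unfolding zero_set_def by simp
    then show "z \<in> \<Inter>\<S>" using fac pc(2) by (auto simp: zero_set_def ev_mult)
  qed
  have "I = (zero_set h \<inter> I) \<union> P" unfolding P_def by blast
  moreover have "(zero_set h \<inter> I) \<inter> P = {}" unfolding P_def by blast
  ultimately have "card I = card (zero_set h \<inter> I) + card P"
    using assms(3) finP by (metis card_Un_disjoint finite_Int)
  moreover have "int ((d - e) * (d - e)) \<le> (int d - 1) ^ 2"
  proof -
    have "int ((d - e) * (d - e)) = (int d - int e) * (int d - int e)" using ed by simp
    also have "\<dots> \<le> (int d - 1) * (int d - 1)" using ed e0 by (intro mult_mono) auto
    finally show ?thesis by (simp add: power2_eq_square)
  qed
  ultimately have "int (card (zero_set h \<inter> I)) \<ge> int (card I) - (int d - 1) ^ 2"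
    using cardP2 by linarith
  then show ?thesis using curve sub by blast
qed

end
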